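(* Let $A_1A_2A_3$ and $B_1B_2B_3$ be triangles in the real projective plane that are perspective from a point $S$, i.e. the three lines $A_1B_1$, $A_2B_2$, $A_3B_3$ pass through $S$. For every permutation $(i,j,k)$ of $(1,2,3)$ let $P_{ij}$ be the intersection point of the lines $A_iA_k$ and $B_jB_k$, and let $C_k$ be the intersection point of the lines $P_{ik}P_{ki}$ and $P_{jk}P_{kj}$. (The configuration is assumed to be in general position, so that all these points and lines are well defined.) Then the triangle $C_1C_2C_3$ is perspective from the point $S$ to the triangle $A_1A_2A_3$ and to the triangle $B_1B_2B_3$; that is, for each $k\in\{1,2,3\}$ the points $S$, $A_k$, $B_k$, $C_k$ are collinear.
   Context: Two configurations with a correspondence between their points are said to be perspective from a point $O$ if all lines joining corresponding points pass through $O$. *)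

theory Defs
  imports "HOL-Analysis.Analysis"
begin

text \<open>Real projective plane via homogeneous coordinates: a point (or a line) is
represented by a nonzero vector of real^3, determined up to a nonzero scalar.
Point p lies on line l iff l \<bullet> p = 0.\<close>

definition proj_distinct :: "real^3 \<Rightarrow> real^3 \<Rightarrow> bool" where
  "proj_distinct p q \<longleftrightarrow> cross3 p q \<noteq> 0"

definition join :: "real^3 \<Rightarrow> real^3 \<Rightarrow> real^3" where
  "join p q = cross3 p q"

definition meet :: "real^3 \<Rightarrow> real^3 \<Rightarrow> real^3" where
  "meet l m = cross3 l m"

definition on_line :: "real^3 \<Rightarrow> real^3 \<Rightarrow> bool" where
  "on_line p l \<longleftrightarrow> l \<bullet> p = 0"

definition proj_collinear :: "(real^3) set \<Rightarrow> bool" where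
  "proj_collinear X \<longleftrightarrow> (\<exists>l. l \<noteq> 0 \<and> (\<forall>p\<in>X. on_line p l))"

definition third :: "nat \<Rightarrow> nat \<Rightarrow> nat" where
  "third i j = 6 - i - j"

definition Ppt :: "(nat \<Rightarrow> real^3) \<Rightarrow> (nat \<Rightarrow> real^3) \<Rightarrow> nat \<Rightarrow> nat \<Rightarrow> real^3" where
  "Ppt A B i j = meet (join (A i) (A (third i j))) (join (B j) (B (third i j)))"

end

theory Submission
  imports Defs
begin

definition pt :: "real^3 \<Rightarrow> real^3 \<Rightarrow> real^3 \<Rightarrow> real^3 \<Rightarrow> real^3" where
  "pt a b c u = u$1 *\<^sub>R a + u$2 *\<^sub>R b + u$3 *\<^sub>R c"
definition ln3 :: "real^3 \<Rightarrow> real^3 \<Rightarrow> real^3 \<Rightarrow> real^3 \<Rightarrow> real^3" where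
  "ln3 a b c u = u$1 *\<^sub>R cross3 b c + u$2 *\<^sub>R cross3 c a + u$3 *\<^sub>R cross3 a b"

lemma L1: "cross3 (pt a b c u) (pt a b c v) = ln3 a b c (cross3 u v)"
  unfolding pt_def ln3_def by (simp add: cross3_simps forall_3)
lemma L2: "cross3 (ln3 a b c u) (ln3 a b c v) = (a \<bullet> cross3 b c) *\<^sub>R pt a b c (cross3 u v)"
  unfolding pt_def ln3_def by (simp add: cross3_simps forall_3)
lemma L3: "ln3 a b c u \<bullet> pt a b c v = (a \<bullet> cross3 b c) * (u \<bullet> v)"
  unfolding pt_def ln3_def by (simp add: cross3_simps forall_3)
lemma L4: "(a \<bullet> cross3 b c) *\<^sub>R x = pt a b c (vector [x \<bullet> cross3 b c, a \<bullet> cross3 x c, a \<bullet> cross3 b x])"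
  unfolding pt_def by (simp add: cross3_simps forall_3)
lemma L5: "(cross3 u v \<bullet> cross3 u v) *\<^sub>R w = ((cross3 u v \<bullet> w) *\<^sub>R cross3 u v) + (w \<bullet> cross3 v (cross3 u v)) *\<^sub>R u + (u \<bullet> cross3 w (cross3 u v)) *\<^sub>R v"
  by (simp add: cross3_simps forall_3)
lemma pt_scale: "pt a b c (r *\<^sub>R u) = r *\<^sub>R pt a b c u"
  unfolding pt_def by (simp add: algebra_simps)
lemma ln3_zero: "ln3 a b c 0 = 0"
  unfolding ln3_def by simp
lemma trip_swap: "cross3 u w \<bullet> v = - (cross3 u v \<bullet> w)"
  by (simp add: cross3_simps)

lemma param:
  fixes e s w :: "real^3"
  assumes "cross3 e s \<noteq> 0" "cross3 e w \<bullet> s = 0"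
  shows "\<exists>al ga. w = al *\<^sub>R e + ga *\<^sub>R s"
proof -
  let ?N = "cross3 e s \<bullet> cross3 e s"
  have N: "?N \<noteq> 0" using assms(1) by simp
  have z: "cross3 e s \<bullet> w = 0" using assms(2) trip_swap[of e w s] by simp
  have "?N *\<^sub>R w = (w \<bullet> cross3 s (cross3 e s)) *\<^sub>R e + (e \<bullet> cross3 w (cross3 e s)) *\<^sub>R s"
    using L5[of e s w] z by simp
  then have "w = (1/?N) *\<^sub>R ((w \<bullet> cross3 s (cross3 e s)) *\<^sub>R e + (e \<bullet> cross3 w (cross3 e s)) *\<^sub>R s)"
    using N by (metis (no_types, lifting) divide_inverse_commute divide_self_if mult_1 scaleR_one scaleR_scaleR)
  then show ?thesis by (auto simp: scaleR_add_right)
qed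

lemma reduced:
  fixes s b1 b2 b3 :: "real^3" and a1 a2 a3 g1 g2 g3 :: real
  assumes "b1 = a1 *\<^sub>R vector [1,0,0] + g1 *\<^sub>R s" "b2 = a2 *\<^sub>R vector [0,1,0] + g2 *\<^sub>R s"
      "b3 = a3 *\<^sub>R vector [0,0,1] + g3 *\<^sub>R s"
  shows "cross3 (vector [0,0,1]) b3 \<bullet> cross3 (cross3 (cross3 (cross3 (vector [1,0,0]) (vector [0,1,0])) (cross3 b3 b2)) (cross3 (cross3 (vector [0,0,1]) (vector [0,1,0])) (cross3 b1 b2)))
                (cross3 (cross3 (cross3 (vector [0,1,0]) (vector [1,0,0])) (cross3 b3 b1)) (cross3 (cross3 (vector [0,0,1]) (vector [1,0,0])) (cross3 b2 b1))) = 0"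
  unfolding assms
  by (simp add: cross3_simps)

lemma core:
  fixes a b c S Bi Bj Bk :: "real^3"
  assumes D: "a \<bullet> cross3 b c \<noteq> 0"
    and on: "cross3 a Bi \<bullet> S = 0" "cross3 b Bj \<bullet> S = 0" "cross3 c Bk \<bullet> S = 0"
    and nS: "cross3 S a \<noteq> 0" "cross3 S b \<noteq> 0" "cross3 S c \<noteq> 0"
  shows "cross3 c Bk \<bullet> cross3 (cross3 (cross3 (cross3 a b) (cross3 Bk Bj)) (cross3 (cross3 c b) (cross3 Bi Bj)))
                (cross3 (cross3 (cross3 b a) (cross3 Bk Bi)) (cross3 (cross3 c a) (cross3 Bj Bi))) = 0"
proof -
  define P where "P = pt a b c"
  define Q where "Q = ln3 a b c"
  define d where "d = a \<bullet> cross3 b c"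
  have PL1: "\<And>u v. cross3 (P u) (P v) = Q (cross3 u v)" unfolding P_def Q_def by (rule L1)
  have PL2: "\<And>u v. cross3 (Q u) (Q v) = d *\<^sub>R P (cross3 u v)" unfolding P_def Q_def d_def by (rule L2)
  have PL3: "\<And>u v. Q u \<bullet> P v = d * (u \<bullet> v)" unfolding P_def Q_def d_def by (rule L3)
  have Q0: "Q 0 = 0" unfolding Q_def by (rule ln3_zero)
  have dnz: "d \<noteq> 0" using D d_def by simp
  have coord: "\<exists>u. x = P u" for x
  proof -
    have "d *\<^sub>R x = P (vector [x \<bullet> cross3 b c, a \<bullet> cross3 x c, a \<bullet> cross3 b x])"
      unfolding d_def P_def by (rule L4)
    then have "x = (1/d) *\<^sub>R P (vector [x \<bullet> cross3 b c, a \<bullet> cross3 x c, a \<bullet> cross3 b x])"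
      using dnz by (metis divide_inverse_commute divide_self_if mult_1 scaleR_one scaleR_scaleR)
    then show ?thesis unfolding P_def pt_scale[symmetric] by blast
  qed
  define e1 where "e1 = (vector [1,0,0] :: real^3)"
  define e2 where "e2 = (vector [0,1,0] :: real^3)"
  define e3 where "e3 = (vector [0,0,1] :: real^3)"
  have ea: "a = P e1" "b = P e2" "c = P e3" unfolding P_def pt_def e1_def e2_def e3_def by simp_all
  obtain s where sS: "S = P s" using coord by blast
  have pm: "\<exists>al ga. w = al *\<^sub>R e + ga *\<^sub>R s" if "x = P e" "cross3 x y \<bullet> S = 0" "cross3 S x \<noteq> 0" "y = P w" for x y e w
  proof -
    have "Q (cross3 s e) \<noteq> 0" using that sS PL1 by metis
    then have "cross3 s e \<noteq> 0" using Q0 by metis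
    then have 1: "cross3 e s \<noteq> 0" by (metis cross_skew neg_equal_0_iff_equal)
    have "d * (cross3 e w \<bullet> s) = 0" using that sS PL1 PL3 by metis
    then have 2: "cross3 e w \<bullet> s = 0" using dnz by simp
    from param[OF 1 2] show ?thesis by blast
  qed
  obtain wi where wi: "Bi = P wi" using coord by blast
  obtain wj where wj: "Bj = P wj" using coord by blast
  obtain wk where wk: "Bk = P wk" using coord by blast
  obtain a1 g1 where h1: "wi = a1 *\<^sub>R e1 + g1 *\<^sub>R s" using pm[OF ea(1) on(1) nS(1) wi] by blast
  obtain a2 g2 where h2: "wj = a2 *\<^sub>R e2 + g2 *\<^sub>R s" using pm[OF ea(2) on(2) nS(2) wj] by blast
  obtain a3 g3 where h3: "wk = a3 *\<^sub>R e3 + g3 *\<^sub>R s" using pm[OF ea(3) on(3) nS(3) wk] by blast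
  have R: "cross3 e3 wk \<bullet> cross3 (cross3 (cross3 (cross3 e1 e2) (cross3 wk wj)) (cross3 (cross3 e3 e2) (cross3 wi wj)))
                (cross3 (cross3 (cross3 e2 e1) (cross3 wk wi)) (cross3 (cross3 e3 e1) (cross3 wj wi))) = 0"
    unfolding e1_def e2_def e3_def by (rule reduced[OF h1[unfolded e1_def] h2[unfolded e2_def] h3[unfolded e3_def]])
  show ?thesis
    unfolding ea wi wj wk
    by (simp only: PL1 PL2 PL3 cross_mult_left cross_mult_right inner_scaleR_right R mult_zero_right)
qed


lemma mv3: "(vector [a, b, c] :: real^3^3) *v x = vector [a \<bullet> x, b \<bullet> x, c \<bullet> x]"
  by (simp add: matrix_vector_mult_def vec_eq_iff forall_3 inner_vec_def sum_3)

lemma noncol_det: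
  fixes a b c :: "real^3"
  assumes "\<not> proj_collinear {a, b, c}"
  shows "a \<bullet> cross3 b c \<noteq> 0"
proof
  assume "a \<bullet> cross3 b c = 0"
  then have "det (vector [a, b, c] :: real^3^3) = 0" by (simp add: dot_cross_det)
  then have "\<not> invertible (vector [a, b, c] :: real^3^3)" by (simp add: invertible_det_nz)
  then have "\<not> (\<forall>x. (vector [a, b, c] :: real^3^3) *v x = 0 \<longrightarrow> x = 0)"
    by (simp add: invertible_left_inverse matrix_left_invertible_ker)
  then obtain x where x: "x \<noteq> 0" "(vector [a, b, c] :: real^3^3) *v x = 0" by blast
  then have "a \<bullet> x = 0" "b \<bullet> x = 0" "c \<bullet> x = 0"
    unfolding mv3 by (simp_all add: vec_eq_iff forall_3)
  then have "proj_collinear {a, b, c}"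
    unfolding proj_collinear_def on_line_def using x(1) by (auto simp: inner_commute)
  then show False using assms by blast
qed

theorem theorem1:
  fixes A B :: "nat \<Rightarrow> real^3" and S :: "real^3"
  assumes nz: "S \<noteq> 0" "\<forall>k\<in>{1,2,3}. A k \<noteq> 0 \<and> B k \<noteq> 0"
    and triA: "\<not> proj_collinear {A 1, A 2, A 3}"
    and triB: "\<not> proj_collinear {B 1, B 2, B 3}"
    and persp: "\<forall>k\<in>{1,2,3}. proj_distinct (A k) (B k) \<and> on_line S (join (A k) (B k))"
    and genS: "\<forall>k\<in>{1,2,3}. proj_distinct S (A k) \<and> proj_distinct S (B k)"
    and genP: "\<forall>i j k. {i,j,k} = {1,2,3} \<longrightarrow>
                 proj_distinct (join (A i) (A k)) (join (B j) (B k))"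
    and genL: "\<forall>i j k. {i,j,k} = {1,2,3} \<longrightarrow>
                 proj_distinct (Ppt A B i k) (Ppt A B k i)"
    and genC: "\<forall>i j k. {i,j,k} = {1,2,3} \<longrightarrow>
                 proj_distinct (join (Ppt A B i k) (Ppt A B k i))
                               (join (Ppt A B j k) (Ppt A B k j))"
  shows "\<forall>i j k. {i,j,k} = {1,2,3} \<longrightarrow>
           proj_collinear {S, A k, B k,
             meet (join (Ppt A B i k) (Ppt A B k i)) (join (Ppt A B j k) (Ppt A B k j))}"
proof (intro allI impI)
  fix i j k :: nat
  assume ijk: "{i,j,k} = {1,2,3}"
  have mem: "i \<in> {1,2,3}" "j \<in> {1,2,3}" "k \<in> {1,2,3}" using ijk by blast+
  have dist: "i \<noteq> j" "i \<noteq> k" "j \<noteq> k"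
  proof -
    have "card {i,j,k} = 3" using ijk by simp
    then show "i \<noteq> j" "i \<noteq> k" "j \<noteq> k" by (auto simp: card_insert_if split: if_splits)
  qed
  have th: "third i k = j" "third j k = i" "third k i = j" "third k j = i"
    using mem dist unfolding third_def by auto
  have sets: "{A i, A j, A k} = {A 1, A 2, A 3}"
  proof -
    have "{A i, A j, A k} = A ` {i,j,k}" by simp
    also have "\<dots> = A ` {1,2,3}" using ijk by simp
    finally show ?thesis by simp
  qed
  have D: "A i \<bullet> cross3 (A j) (A k) \<noteq> 0"
    using noncol_det[of "A i" "A j" "A k"] triA sets by simp
  have on: "cross3 (A m) (B m) \<bullet> S = 0" if "m \<in> {1,2,3}" for m
    using persp that unfolding on_line_def join_def by (auto simp: inner_commute)
  have nS: "cross3 S (A m) \<noteq> 0" if "m \<in> {1,2,3}" for m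
    using genS that unfolding proj_distinct_def by auto
  have l0: "cross3 (A k) (B k) \<noteq> 0"
    using persp mem(3) unfolding proj_distinct_def by auto
  have C: "cross3 (A k) (B k) \<bullet> meet (join (Ppt A B i k) (Ppt A B k i)) (join (Ppt A B j k) (Ppt A B k j)) = 0"
    unfolding meet_def join_def Ppt_def th
    by (rule core[OF D on[OF mem(1)] on[OF mem(2)] on[OF mem(3)] nS[OF mem(1)] nS[OF mem(2)] nS[OF mem(3)]])
  show "proj_collinear {S, A k, B k,
             meet (join (Ppt A B i k) (Ppt A B k i)) (join (Ppt A B j k) (Ppt A B k j))}"
    unfolding proj_collinear_def
  proof (intro exI[of _ "cross3 (A k) (B k)"] conjI l0 ballI)
    fix p assume "p \<in> {S, A k, B k,
             meet (join (Ppt A B i k) (Ppt A B k i)) (join (Ppt A B j k) (Ppt A B k j))}"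
    then show "on_line p (cross3 (A k) (B k))"
      unfolding on_line_def using on[OF mem(3)] C
      by (auto simp: dot_cross_self inner_commute)
  qed
qed

end
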